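(* Let $\mathcal{A}=\mathbb{R}[x^2,x^3]$ (the subring of $\mathbb{R}[x]$ generated over $\mathbb{R}$ by $x^2$ and $x^3$), with field of fractions $\mathcal{F}$, and let $\mathcal{Z}=\{\alpha x^2+\beta x^3\mid \alpha,\beta\in\mathcal{A}\}$ be the ideal of elements of $\mathcal{A}$ with zero constant term. Then every causal (single-input single-output) transfer function, i.e. every $p\in\mathcal{P}=\{n/d\mid n\in\mathcal{A},\ d\in\mathcal{A}\setminus\mathcal{Z}\}$, is stabilizable.
   Context: For a single-input single-output plant $p\in\mathcal{F}$ and controller $c\in\mathcal{F}$ with $1+pc\neq0$, the closed-loop matrix is $H(p,c)=\begin{pmatrix}(1+pc)^{-1} & -p(1+pc)^{-1}\\ c(1+pc)^{-1} & (1+pc)^{-1}\end{pmatrix}$; $p$ is stabilizable if there exists $c\in\mathcal{F}$ with $1+pc\neq0$ such that all entries of $H(p,c)$ lie in $\mathcal{A}$. *)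

theory Defs
  imports "HOL-Computational_Algebra.Polynomial_Factorial"
begin

inductive_set Aring :: "real poly set" where
  const: "[:c:] \<in> Aring"
| sq: "monom 1 2 \<in> Aring"
| cube: "monom 1 3 \<in> Aring"
| add: "p \<in> Aring \<Longrightarrow> q \<in> Aring \<Longrightarrow> p + q \<in> Aring"
| neg: "p \<in> Aring \<Longrightarrow> - p \<in> Aring"
| mult: "p \<in> Aring \<Longrightarrow> q \<in> Aring \<Longrightarrow> p * q \<in> Aring"

definition Zideal :: "real poly set" where
  "Zideal = {a * monom 1 2 + b * monom 1 3 | a b. a \<in> Aring \<and> b \<in> Aring}"

definition Aemb :: "real poly fract set" where
  "Aemb = to_fract ` Aring"

text \<open>The field of fractions F of A, realised inside the fraction field of R[x].\<close>
definition Ffield :: "real poly fract set" where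
  "Ffield = {to_fract n / to_fract d | n d. n \<in> Aring \<and> d \<in> Aring \<and> d \<noteq> 0}"

definition Pcausal :: "real poly fract set" where
  "Pcausal = {to_fract n / to_fract d | n d. n \<in> Aring \<and> d \<in> Aring - Zideal}"

definition closed_loop :: "real poly fract \<Rightarrow> real poly fract \<Rightarrow> real poly fract list" where
  "closed_loop p c = [inverse (1 + p * c), - p * inverse (1 + p * c),
                      c * inverse (1 + p * c), inverse (1 + p * c)]"

definition stabilizable :: "real poly fract \<Rightarrow> bool" where
  "stabilizable p \<longleftrightarrow> (\<exists>c \<in> Ffield. 1 + p * c \<noteq> 0 \<and> set (closed_loop p c) \<subseteq> Aemb)"

end

theory Submission
  imports Defs "HOL-Computational_Algebra.Computational_Algebra" "HOL-Computational_Algebra.Field_as_Ring"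
begin

lemma coeff_mult_1: "coeff (p * q) 1 = coeff p 0 * coeff q 1 + coeff p 1 * coeff q 0"
  by (simp add: coeff_mult atMost_Suc algebra_simps)

lemma Aring_coeff1: "p \<in> Aring \<Longrightarrow> coeff p 1 = 0"
  by (induction rule: Aring.induct) (auto simp: coeff_mult_1[simplified] coeff_monom)

lemma xpow_Aring: "k \<ge> 2 \<Longrightarrow> monom (1::real) k \<in> Aring"
proof (induction k rule: less_induct)
  case (less k)
  show ?case
  proof (cases "k = 2 \<or> k = 3")
    case True then show ?thesis using Aring.sq Aring.cube by auto
  next
    case False
    then have "k - 2 \<ge> 2" "k - 2 < k" using less.prems by auto
    then have "monom 1 (k-2) \<in> Aring" using less.IH by blast
    moreover have "monom (1::real) k = monom 1 2 * monom 1 (k-2)"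
      using less.prems by (simp add: mult_monom) (metis add_2_eq_Suc le_add_diff_inverse)
    ultimately show ?thesis using Aring.sq Aring.mult by metis
  qed
qed

lemma monom_Aring: "k \<noteq> 1 \<Longrightarrow> monom (c::real) k \<in> Aring"
proof (cases "k = 0")
  case True then show ?thesis using Aring.const[of c] by (simp add: monom_0)
next
  case False
  assume "k \<noteq> 1"
  then have "monom 1 k \<in> Aring" using False xpow_Aring by auto
  moreover have "monom c k = [:c:] * monom 1 k" by (simp add: smult_monom)
  ultimately show ?thesis using Aring.const Aring.mult by metis
qed

lemma Aring_sum: "finite S \<Longrightarrow> (\<And>i. i \<in> S \<Longrightarrow> f i \<in> Aring) \<Longrightarrow> sum f S \<in> Aring"
proof (induction S rule: finite_induct)
  case empty
  then show ?case using Aring.const[of 0] by simp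
next
  case (insert x F)
  then show ?case using Aring.add by auto
qed

lemma coeff1_Aring: "coeff (p::real poly) 1 = 0 \<Longrightarrow> p \<in> Aring"
proof -
  assume h: "coeff p 1 = 0"
  have "(\<Sum>i\<le>degree p. monom (coeff p i) i) \<in> Aring"
  proof (rule Aring_sum)
    fix i show "monom (coeff p i) i \<in> Aring"
      using h monom_Aring[of i "coeff p i"] Aring.const[of 0] by (cases "i = 1") auto
  qed simp
  then show ?thesis by (simp add: poly_as_sum_of_monoms)
qed

lemma Aring_iff: "p \<in> Aring \<longleftrightarrow> coeff p 1 = 0"
  using Aring_coeff1 coeff1_Aring by blast

lemma notZ_coeff0: assumes "d \<in> Aring - Zideal" shows "coeff d 0 \<noteq> 0"
proof
  assume h0: "coeff d 0 = 0"
  have h1: "coeff d 1 = 0" using assms Aring_coeff1 by auto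
  define e where "e = poly_shift 2 d"
  have de: "d = monom 1 2 * e"
  proof (rule poly_eqI)
    fix k show "coeff d k = coeff (monom 1 2 * e) k"
      using h0 h1 unfolding e_def coeff_monom_mult coeff_poly_shift
      by (cases k; cases "k - 1"; simp)
  qed
  define a where "a = e - monom (coeff e 1) 1"
  have aA: "a \<in> Aring" unfolding Aring_iff a_def by (simp add: coeff_monom)
  have "d = a * monom 1 2 + [:coeff e 1:] * monom 1 3"
    unfolding a_def de by (simp add: algebra_simps mult_monom smult_monom numeral_3_eq_3)
  then have "d \<in> Zideal" unfolding Zideal_def using aA Aring.const by blast
  then show False using assms by blast
qed

lemma key:
  fixes a b v w :: "real poly"
  assumes bez: "a*v + b*w = 1" and bv: "coeff (b*v) 1 = 0"
    and cr: "coeff a 1 * coeff b 0 = coeff a 0 * coeff b 1" and b0: "coeff b 0 \<noteq> 0"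
  shows "coeff (b*w) 1 = 0 \<and> coeff (a*w) 1 = 0"
proof -
  have s: "coeff (a*v) 1 + coeff (b*w) 1 = 0"
    using arg_cong[OF bez, of "\<lambda>p. coeff p 1"] by simp
  have e1: "b*(a*v) = a*(b*v)" by (simp add: algebra_simps)
  have "coeff b 0 * coeff (a*v) 1 + coeff b 1 * (coeff a 0 * coeff v 0)
      = coeff a 0 * coeff (b*v) 1 + coeff a 1 * (coeff b 0 * coeff v 0)"
    using arg_cong[OF e1, of "\<lambda>p. coeff p 1"] by (simp only: coeff_mult_1 coeff_mult_0)
  then have "coeff b 0 * coeff (a*v) 1 = coeff v 0 * (coeff a 1 * coeff b 0 - coeff a 0 * coeff b 1)"
    using bv by (simp add: algebra_simps)
  then have "coeff b 0 * coeff (a*v) 1 = 0" using cr by simp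
  then have av: "coeff (a*v) 1 = 0" using b0 by simp
  then have bw: "coeff (b*w) 1 = 0" using s by simp
  have e2: "b*(a*w) = a*(b*w)" by (simp add: algebra_simps)
  have "coeff b 0 * coeff (a*w) 1 + coeff b 1 * (coeff a 0 * coeff w 0)
      = coeff a 0 * coeff (b*w) 1 + coeff a 1 * (coeff b 0 * coeff w 0)"
    using arg_cong[OF e2, of "\<lambda>p. coeff p 1"] by (simp only: coeff_mult_1 coeff_mult_0)
  then have "coeff b 0 * coeff (a*w) 1 = coeff w 0 * (coeff a 1 * coeff b 0 - coeff a 0 * coeff b 1)"
    using bw by (simp add: algebra_simps)
  then have "coeff b 0 * coeff (a*w) 1 = 0" using cr by simp
  then show ?thesis using b0 bw by simp
qed

lemma coeff_x_mult_1: "coeff (p * monom (q::real) 1) 1 = coeff p 0 * q"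
  by (simp add: coeff_mult atMost_Suc coeff_monom)

lemma coeff_x2_mult_1: "coeff (p * monom (1::real) 2) 1 = 0"
  by (simp add: coeff_mult atMost_Suc coeff_monom)

theorem proposition5:
  assumes "p \<in> Pcausal"
  shows "stabilizable p"
proof -
  obtain n d where p: "p = to_fract n / to_fract d" and nA: "n \<in> Aring" and dA: "d \<in> Aring - Zideal"
    using assms unfolding Pcausal_def by blast
  have d0: "coeff d 0 \<noteq> 0" using notZ_coeff0[OF dA] .
  then have dnz: "d \<noteq> 0" by auto
  have n1: "coeff n 1 = 0" using nA Aring_coeff1 by blast
  have d1: "coeff d 1 = 0" using dA Aring_coeff1 by blast
  define g where "g = gcd n d"
  have gnz: "g \<noteq> 0" using dnz unfolding g_def by simp
  define a where "a = n div g"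
  define b where "b = d div g"
  have na: "n = g * a" unfolding a_def g_def by simp
  have db: "d = g * b" unfolding b_def g_def by simp
  have bnz: "b \<noteq> 0" using dnz db by auto
  obtain X Y where XY: "X * n + Y * d = g" unfolding g_def using bezout_coefficients_fst_snd by blast
  have "g * (X * a + Y * b) = g * 1" using XY na db by (simp add: algebra_simps)
  then have bez: "X * a + Y * b = 1" using gnz by (metis mult_left_cancel)
  have cross: "n * b = a * d" using na db by (simp add: algebra_simps)
  have c0: "coeff n 0 * coeff b 0 = coeff a 0 * coeff d 0"
    using arg_cong[OF cross, of "\<lambda>p. coeff p 0"] by (simp add: coeff_mult_0)
  have c1: "coeff n 0 * coeff b 1 = coeff a 1 * coeff d 0"
    using arg_cong[OF cross, of "\<lambda>p. coeff p 1"] n1 d1 by (simp add: coeff_mult atMost_Suc)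
  have b0: "coeff b 0 \<noteq> 0"
  proof
    assume h: "coeff b 0 = 0"
    then have "coeff a 0 = 0" using c0 d0 by simp
    then show False using arg_cong[OF bez, of "\<lambda>p. coeff p 0"] h by (simp add: coeff_mult_0)
  qed
  have "coeff d 0 * (coeff a 1 * coeff b 0) = coeff d 0 * (coeff a 0 * coeff b 1)"
  proof -
    have "coeff d 0 * (coeff a 1 * coeff b 0) = coeff b 0 * (coeff n 0 * coeff b 1)"
      using c1 by (simp add: algebra_simps)
    also have "\<dots> = coeff b 1 * (coeff n 0 * coeff b 0)" by (simp add: algebra_simps)
    also have "\<dots> = coeff d 0 * (coeff a 0 * coeff b 1)" using c0 by (simp add: algebra_simps)
    finally show ?thesis .
  qed
  then have cr: "coeff a 1 * coeff b 0 = coeff a 0 * coeff b 1" using d0 by simp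
  define q where "q = - coeff (b * X) 1 / (coeff b 0)^2"
  define V0 where "V0 = X + b * monom q 1"
  define W0 where "W0 = Y - a * monom q 1"
  have bez0: "a * V0 + b * W0 = 1" using bez unfolding V0_def W0_def by (simp add: algebra_simps)
  have bV0: "coeff (b * V0) 1 = 0"
  proof -
    have "b * V0 = b * X + (b * b) * monom q 1" unfolding V0_def by (simp add: algebra_simps)
    then have "coeff (b * V0) 1 = coeff (b * X) 1 + (coeff b 0)^2 * q"
      by (simp only: coeff_add coeff_x_mult_1 coeff_mult_0 power2_eq_square)
    then show ?thesis unfolding q_def using b0 by (simp add: field_simps)
  qed
  obtain V W where bezVW: "a * V + b * W = 1" and bV: "coeff (b * V) 1 = 0" and Wnz: "W \<noteq> 0"
  proof (cases "W0 = 0")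
    case False then show ?thesis using that bez0 bV0 by blast
  next
    case True
    then have anz: "a \<noteq> 0" using bez0 by auto
    define V where "V = V0 + b * monom 1 2"
    define W where "W = - a * monom 1 2"
    have "a * V + b * W = 1" using bez0 True unfolding V_def W_def by (simp add: algebra_simps)
    moreover have "coeff (b * V) 1 = 0"
    proof -
      have "b * V = b * V0 + (b * b) * monom 1 2" unfolding V_def by (simp add: algebra_simps)
      then show ?thesis using bV0 by (simp only: coeff_add coeff_x2_mult_1)
    qed
    moreover have "W \<noteq> 0" unfolding W_def using anz by simp
    ultimately show ?thesis using that by blast
  qed
  from key[OF bezVW bV cr b0] have bW: "coeff (b * W) 1 = 0" and aW: "coeff (a * W) 1 = 0" by auto
  have bVA: "b * V \<in> Aring" and bWA: "b * W \<in> Aring" and aWA: "- (a * W) \<in> Aring"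
    using bV bW aW Aring_iff by auto
  have bWnz: "b * W \<noteq> 0" using bnz Wnz by simp
  define c where "c = to_fract (b * V) / to_fract (b * W)"
  have cF: "c \<in> Ffield" unfolding c_def Ffield_def using bVA bWA bWnz by blast
  have p2: "p = to_fract a / to_fract b"
    using p na db gnz by simp
  have fb: "to_fract a * to_fract V + to_fract b * to_fract W = 1"
    using arg_cong[OF bezVW, of to_fract] by simp
  have tb: "to_fract b \<noteq> 0" and tW: "to_fract W \<noteq> 0" using bnz Wnz by auto
  have onepc: "1 + p * c = inverse (to_fract (b * W))"
    unfolding p2 c_def using fb tb tW by (simp add: field_simps)
  have inv: "inverse (1 + p * c) = to_fract (b * W)" using onepc by simp
  have "1 + p * c \<noteq> 0" using onepc tb tW by simp
  moreover have "set (closed_loop p c) \<subseteq> Aemb"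
  proof -
    have e2: "- p * inverse (1 + p * c) = to_fract (- (a * W))"
      using tb by (simp only: inv, simp add: p2 field_simps)
    have e3: "c * inverse (1 + p * c) = to_fract (b * V)"
      using tb tW by (simp only: inv, simp add: c_def field_simps)
    show ?thesis unfolding closed_loop_def Aemb_def using e2 e3 inv bVA bWA aWA
      by (simp del: to_fract_uminus to_fract_mult add: image_iff)
  qed
  ultimately show ?thesis unfolding stabilizable_def using cF by blast
qed

end
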